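(* Let $S$ be a numerical semigroup with minimal generators $a_1<a_2<\cdots<a_\nu$, with embedding dimension $\nu=\nu(S)\ge10$. If $a_2>\frac{c(S)+\mu(S)}{3}$ and $$\mu(S)\le\frac{8}{25}\nu^2+\frac15\nu-\frac54,$$ then $S$ satisfies Wilf's conjecture, i.e. $\nu(S)|L(S)|\ge c(S)$.
   Context: A numerical semigroup is a submonoid $S\subseteq\mathbb{N}$ with finite complement. $\nu(S)$ is the number of minimal generators, $\mu(S)=a_1$ the multiplicity, $c(S)$ the conductor (least integer with $c(S)+\mathbb{N}\subseteq S$), and $L(S)=\{x\in S:0\le x<c(S)\}$. *)

theory Defs
  imports Complex_Main
begin

definition numerical_semigroup :: "nat set \<Rightarrow> bool" where
  "numerical_semigroup S \<longleftrightarrow> 0 \<in> S \<and> (\<forall>x\<in>S. \<forall>y\<in>S. x + y \<in> S) \<and> finite (UNIV - S)"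

definition min_gens :: "nat set \<Rightarrow> nat set" where
  "min_gens S = {x \<in> S. x \<noteq> 0 \<and> \<not> (\<exists>y\<in>S. \<exists>z\<in>S. y \<noteq> 0 \<and> z \<noteq> 0 \<and> x = y + z)}"

definition embdim :: "nat set \<Rightarrow> nat" where
  "embdim S = card (min_gens S)"

definition multiplicity :: "nat set \<Rightarrow> nat" where
  "multiplicity S = (LEAST x. x \<in> S \<and> x \<noteq> 0)"

definition conductor :: "nat set \<Rightarrow> nat" where
  "conductor S = (LEAST c. \<forall>n\<ge>c. n \<in> S)"

definition left_elts :: "nat set \<Rightarrow> nat set" where
  "left_elts S = {x \<in> S. x < conductor S}"

end

theory Submission
  imports Defs
begin

lemma ceil_lt:
  fixes m a k :: nat assumes "0 < m"
  shows "k < (a + m - 1) div m \<longleftrightarrow> k*m < a"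
proof -
  have "k < (a + m - 1) div m \<longleftrightarrow> Suc k * m \<le> a + m - 1"
    using assms by (metis Suc_le_eq less_eq_div_iff_mult_less_eq)
  also have "\<dots> \<longleftrightarrow> k*m < a" using assms by auto
  finally show ?thesis .
qed

lemma ceil_ge:
  fixes m a :: nat assumes "0 < m"
  shows "a \<le> ((a + m - 1) div m) * m" "((a + m - 1) div m) * m < a + m"
proof -
  have e: "((a + m - 1) div m) * m + (a + m - 1) mod m = a + m - 1" by simp
  have "(a + m - 1) mod m < m" using assms by simp
  with e show "a \<le> ((a + m - 1) div m) * m" by linarith
  from e show "((a + m - 1) div m) * m < a + m" using assms by linarith
qed

lemma pair_sum:
  fixes T :: "'a::linorder set" and N :: "'a \<Rightarrow> nat"
  assumes "finite T"
  shows "(\<Sum>p\<in>{p. fst p \<in> T \<and> snd p \<in> T \<and> fst p \<le> snd p}. N (fst p) + N (snd p))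
         = (card T + 1) * (\<Sum>x\<in>T. N x)"
proof -
  let ?P = "{p. fst p \<in> T \<and> snd p \<in> T \<and> fst p \<le> snd p}"
  have P1: "?P = Sigma T (\<lambda>x. {y\<in>T. x \<le> y})" by auto
  have P2: "?P = (\<lambda>(y,x). (x,y)) ` Sigma T (\<lambda>y. {x\<in>T. x \<le> y})" by (auto simp: image_iff)
  have s1: "(\<Sum>p\<in>?P. N (fst p)) = (\<Sum>x\<in>T. N x * card {y\<in>T. x \<le> y})"
  proof -
    have "(\<Sum>x\<in>T. \<Sum>y\<in>{y\<in>T. x \<le> y}. N x) = (\<Sum>(x,y)\<in>Sigma T (\<lambda>x. {y\<in>T. x \<le> y}). N x)"
      using assms by (intro sum.Sigma) auto
    then show ?thesis unfolding P1 by (simp add: split_def mult.commute)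
  qed
  have inj: "inj_on (\<lambda>(y,x). (x,y)) (Sigma T (\<lambda>y. {x\<in>T. x \<le> y}))" by (auto simp: inj_on_def)
  have s2: "(\<Sum>p\<in>?P. N (snd p)) = (\<Sum>y\<in>T. N y * card {x\<in>T. x \<le> y})"
  proof -
    have "(\<Sum>y\<in>T. \<Sum>x\<in>{x\<in>T. x \<le> y}. N y) = (\<Sum>(y,x)\<in>Sigma T (\<lambda>y. {x\<in>T. x \<le> y}). N y)"
      using assms by (intro sum.Sigma) auto
    moreover have "(\<Sum>p\<in>?P. N (snd p)) = (\<Sum>(y,x)\<in>Sigma T (\<lambda>y. {x\<in>T. x \<le> y}). N y)"
      unfolding P2 by (subst sum.reindex[OF inj]) (simp add: split_def)
    ultimately show ?thesis by (simp add: mult.commute)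
  qed
  have c: "card {y\<in>T. x \<le> y} + card {y\<in>T. y \<le> x} = card T + 1" if "x \<in> T" for x
  proof -
    have "card ({y\<in>T. x \<le> y} \<union> {y\<in>T. y \<le> x}) + card ({y\<in>T. x \<le> y} \<inter> {y\<in>T. y \<le> x})
       = card {y\<in>T. x \<le> y} + card {y\<in>T. y \<le> x}"
      using assms by (intro card_Un_Int[symmetric]) auto
    moreover have "{y\<in>T. x \<le> y} \<union> {y\<in>T. y \<le> x} = T" by auto
    moreover have "{y\<in>T. x \<le> y} \<inter> {y\<in>T. y \<le> x} = {x}" using that by auto
    ultimately show ?thesis by simp
  qed
  have "(\<Sum>p\<in>?P. N (fst p) + N (snd p)) = (\<Sum>x\<in>T. N x * (card {y\<in>T. x \<le> y} + card {y\<in>T. y \<le> x}))"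
    by (simp add: sum.distrib s1 s2 algebra_simps)
  also have "\<dots> = (\<Sum>x\<in>T. (card T + 1) * N x)" using c by (intro sum.cong) (auto simp: mult.commute)
  finally show ?thesis by (simp only: sum_distrib_left)
qed

lemma mod_close:
  fixes x y m :: nat
  assumes "x mod m = y mod m" "x < y + m" "y < x + m"
  shows "x = y"
proof (cases "x \<le> y")
  case True
  hence "m dvd y - x" using assms(1) mod_eq_dvd_iff_nat by metis
  moreover have "y - x < m" using assms True by linarith
  ultimately show ?thesis using True by (metis diff_is_0_eq' dvd_imp_le le_antisym not_le zero_less_diff)
next
  case False
  hence "m dvd x - y" using assms(1) mod_eq_dvd_iff_nat by (metis nat_le_linear)
  moreover have "x - y < m" using assms False by linarith
  ultimately show ?thesis using False by (metis diff_is_0_eq' dvd_imp_le le_antisym not_le zero_less_diff)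
qed

theorem proposition4p6:
  fixes S :: "nat set" and a :: "nat \<Rightarrow> nat"
  assumes "numerical_semigroup S"
    and "embdim S \<ge> 10"
    and "strict_mono_on {1..embdim S} a"
    and "a ` {1..embdim S} = min_gens S"
    and "real (a 2) > (real (conductor S) + real (multiplicity S)) / 3"
    and "real (multiplicity S) \<le> 8/25 * real (embdim S) ^ 2 + 1/5 * real (embdim S) - 5/4"
  shows "embdim S * card (left_elts S) \<ge> conductor S"
proof -
  define n where "n = embdim S"
  define G where "G = min_gens S"
  define m where "m = multiplicity S"
  define c where "c = conductor S"
  define L where "L = left_elts S"
  note ns = assms(1)[unfolded numerical_semigroup_def]
  have S0: "0 \<in> S" and fin: "finite (UNIV - S)" using ns by auto
  have Sadd: "\<And>x y. x \<in> S \<Longrightarrow> y \<in> S \<Longrightarrow> x + y \<in> S" using ns by auto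
  have G_def': "\<And>x. x \<in> G \<longleftrightarrow> x \<in> S \<and> x \<noteq> 0 \<and> \<not> (\<exists>y\<in>S. \<exists>z\<in>S. y \<noteq> 0 \<and> z \<noteq> 0 \<and> x = y + z)"
    unfolding G_def min_gens_def by auto
  have decomp: "\<And>x. x \<in> S \<Longrightarrow> x \<noteq> 0 \<Longrightarrow> x \<notin> G \<Longrightarrow> \<exists>y z. y \<in> S \<and> z \<in> S \<and> y \<noteq> 0 \<and> z \<noteq> 0 \<and> x = y + z"
    using G_def' by blast
  have gen_nd: "\<And>x y z. x \<in> G \<Longrightarrow> y \<in> S \<Longrightarrow> z \<in> S \<Longrightarrow> y \<noteq> 0 \<Longrightarrow> z \<noteq> 0 \<Longrightarrow> x \<noteq> y + z"
    using G_def' by blast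
  have GS: "\<And>x. x \<in> G \<Longrightarrow> x \<in> S" and G0: "\<And>x. x \<in> G \<Longrightarrow> x \<noteq> 0" using G_def' by auto
  obtain b where b: "\<forall>x\<in>UNIV - S. x < b" using fin finite_nat_set_iff_bounded by blast
  have "\<forall>x\<ge>b. x \<in> S" using b by (metis DiffI UNIV_I leD)
  hence "\<forall>x\<ge>c. x \<in> S" unfolding c_def conductor_def by (rule LeastI)
  hence hc: "\<And>x. c \<le> x \<Longrightarrow> x \<in> S" by blast
  have cS: "c \<in> S" using hc by simp
  have nG: "card G = n" unfolding n_def embdim_def G_def ..
  have n10: "n \<ge> 10" using assms(2) n_def by simp
  have aimg: "a ` {1..n} = G" using assms(4) n_def G_def by simp
  have amono: "strict_mono_on {1..n} a" using assms(3) n_def by simp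
  have finG: "finite G" using aimg by (metis finite_atLeastAtMost finite_imageI)
  have c_pos: "c > 0"
  proof (rule ccontr)
    assume "\<not> c > 0" hence "c = 0" by simp
    hence allS: "\<And>x. x \<in> S" using hc by simp
    have "G \<subseteq> {1}"
    proof
      fix x assume "x \<in> G"
      hence "x \<noteq> 0" using G_def' by blast
      show "x \<in> {1}"
      proof (rule ccontr)
        assume "x \<notin> {1}" hence "x = 1 + (x - 1)" "x - 1 \<noteq> 0" using \<open>x \<noteq> 0\<close> by auto
        thus False using gen_nd[OF \<open>x\<in>G\<close> allS allS, of 1 "x - 1"] by simp
      qed
    qed
    hence "card G \<le> 1" using card_mono[of "{1}" G] by simp
    thus False using n10 nG by simp
  qed
  have mS: "m \<in> S" and m_nz: "m \<noteq> 0"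
    using LeastI[of "\<lambda>x. x \<in> S \<and> x \<noteq> 0" c] cS c_pos unfolding m_def multiplicity_def by auto
  have m_pos: "0 < m" using m_nz by simp
  have m_le: "\<And>x. x \<in> S \<Longrightarrow> x \<noteq> 0 \<Longrightarrow> m \<le> x" unfolding m_def multiplicity_def by (simp add: Least_le)
  have mc: "m \<le> c" using m_le cS c_pos by simp
  have multS: "\<And>k. k * m \<in> S"
  proof -
    fix k show "k * m \<in> S" by (induct k) (auto simp: S0 Sadd mS)
  qed
  have mG: "m \<in> G"
  proof -
    have "\<not> (\<exists>y\<in>S. \<exists>z\<in>S. y \<noteq> 0 \<and> z \<noteq> 0 \<and> m = y + z)"
    proof
      assume "\<exists>y\<in>S. \<exists>z\<in>S. y \<noteq> 0 \<and> z \<noteq> 0 \<and> m = y + z"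
      then obtain y z where "y\<in>S" "z\<in>S" "y\<noteq>0" "z\<noteq>0" "m = y+z" by blast
      with m_le[of y] show False by auto
    qed
    thus ?thesis using G_def' mS m_nz by blast
  qed
  have a_in: "\<And>i. i \<in> {1..n} \<Longrightarrow> a i \<in> G" using aimg by auto
  have in1n: "1 \<in> {1..n}" "2 \<in> {1..n}" using n10 by auto
  have a1: "a 1 = m"
  proof -
    obtain j where j: "j \<in> {1..n}" "a j = m" using mG aimg by (metis imageE)
    have "a 1 \<le> a j" using strict_mono_on_leD[OF amono in1n(1) j(1)] j by simp
    moreover have "m \<le> a 1" using m_le GS G0 a_in in1n by blast
    ultimately show ?thesis using j by simp
  qed
  have a2m: "m < a 2" using strict_mono_onD[OF amono in1n(1) in1n(2)] a1 by simp
  have ge_a2: "\<And>x. x \<in> G \<Longrightarrow> x \<noteq> m \<Longrightarrow> a 2 \<le> x"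
  proof -
    fix x assume x: "x \<in> G" "x \<noteq> m"
    obtain i where i: "i \<in> {1..n}" "x = a i" using x aimg by (metis imageE)
    have "i \<noteq> 1" using i x a1 by auto
    hence "2 \<le> i" using i by auto
    thus "a 2 \<le> x" using strict_mono_on_leD[OF amono in1n(2) i(1)] i by simp
  qed
  have h3: "c + m < 3 * a 2"
  proof -
    have "real c + real m < 3 * real (a 2)" using assms(5) unfolding c_def m_def by simp
    thus ?thesis by linarith
  qed

  have dvd_small: "\<And>u. u \<in> S \<Longrightarrow> u < a 2 \<Longrightarrow> m dvd u"
  proof -
    fix u show "u \<in> S \<Longrightarrow> u < a 2 \<Longrightarrow> m dvd u"
    proof (induction u rule: less_induct)
      case (less u)
      show ?case
      proof (cases "u = 0")
        case True thus ?thesis by simp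
      next
        case False
        show ?thesis
        proof (cases "u \<in> G")
          case True
          hence "u = m" using ge_a2 less.prems by force
          thus ?thesis by simp
        next
          case False
          then obtain y z where yz: "y \<in> S" "z \<in> S" "y \<noteq> 0" "z \<noteq> 0" "u = y + z"
            using decomp less.prems \<open>u \<noteq> 0\<close> by blast
          have "m dvd y" using less.IH[of y] yz less.prems by simp
          moreover have "m dvd z" using less.IH[of z] yz less.prems by simp
          ultimately show ?thesis using yz by simp
        qed
      qed
    qed
  qed
  have apery_big: "\<And>w u. m \<le> w \<Longrightarrow> w - m \<notin> S \<Longrightarrow> u \<in> S \<Longrightarrow> u \<noteq> 0 \<Longrightarrow> u \<le> w \<Longrightarrow> w - u \<in> S \<Longrightarrow> a 2 \<le> u"
  proof (rule ccontr)
    fix w u assume h: "m \<le> w" "w - m \<notin> S" "u \<in> S" "u \<noteq> 0" "u \<le> w" "w - u \<in> S" "\<not> a 2 \<le> u"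
    then obtain k where k: "u = m * k" using dvd_small by (meson dvdE not_le)
    have "k \<noteq> 0" using k h by auto
    hence "u - m = (k - 1) * m" using k by (simp add: algebra_simps diff_mult_distrib)
    hence "u - m \<in> S" using multS by simp
    moreover have "m \<le> u" using m_le h by simp
    ultimately have "(u - m) + (w - u) \<in> S" using Sadd h(6) by blast
    moreover have "(u - m) + (w - u) = w - m" using \<open>m \<le> u\<close> h by simp
    ultimately show False using h by simp
  qed
  have finL: "finite L" unfolding L_def left_elts_def c_def[symmetric]
    by (rule finite_subset[of _ "{..<c}"]) auto
  show ?thesis
  proof (cases "c = m")
    case True
    have "{m..<2*m} \<subseteq> G"
    proof
      fix x assume x: "x \<in> {m..<2*m}"
      have "x \<in> S" using hc True x by auto
      moreover have "x \<noteq> 0" using x m_pos by auto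
      moreover have "\<not> (\<exists>y\<in>S. \<exists>z\<in>S. y \<noteq> 0 \<and> z \<noteq> 0 \<and> x = y + z)"
      proof
        assume "\<exists>y\<in>S. \<exists>z\<in>S. y \<noteq> 0 \<and> z \<noteq> 0 \<and> x = y + z"
        then obtain y z where "y\<in>S" "z\<in>S" "y\<noteq>0" "z\<noteq>0" "x = y+z" by blast
        with m_le[of y] m_le[of z] x show False by auto
      qed
      ultimately show "x \<in> G" using G_def' by blast
    qed
    hence "card {m..<2*m} \<le> card G" by (rule card_mono[OF finG])
    hence "m \<le> n" using nG by simp
    have "0 \<in> L" using S0 c_pos unfolding L_def left_elts_def c_def by simp
    hence "1 \<le> card L" using finL by (metis One_nat_def Suc_leI card_gt_0_iff empty_iff)
    hence "n \<le> n * card L" by simp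
    hence "c \<le> n * card L" using \<open>m \<le> n\<close> True by linarith
    thus ?thesis unfolding n_def L_def c_def by simp
  next
    case False
    hence mlc: "m < c" using mc by simp
    define T where "T = {x \<in> G. x \<noteq> m \<and> x < c}"
    define H where "H = {x \<in> G. c \<le> x}"
    define W where "W = {c..<c+m}"
    define N where "N = (\<lambda>x. (c - x + m - 1) div m)"
    define q where "q = (c + m - 1) div m"
    define Q where "Q = {w. w \<in> S \<and> 0 < w \<and> w < c + m \<and> w \<notin> G \<and> (m \<le> w \<longrightarrow> w - m \<notin> S)}"
    have qm1: "c \<le> q * m" and qm2: "q * m < c + m" using ceil_ge[OF m_pos, of c] unfolding q_def by auto
    have finT: "finite T" and finH: "finite H" using finG unfolding T_def H_def by auto
    have finQ: "finite Q" by (rule finite_subset[of _ "{..<c+m}"]) (auto simp: Q_def)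
    have TG: "\<And>x. x \<in> T \<Longrightarrow> x \<in> G" and Tc: "\<And>x. x \<in> T \<Longrightarrow> x < c"
      and Tm: "\<And>x. x \<in> T \<Longrightarrow> m < x" unfolding T_def using ge_a2 a2m by (fastforce, fastforce, fastforce)
    have ncard: "n = card T + card H + 1"
    proof -
      have Gsplit: "G = insert m (T \<union> H)" using mG unfolding T_def H_def by auto
      have "m \<notin> T \<union> H" using mlc unfolding T_def H_def by auto
      moreover have "T \<inter> H = {}" by (auto simp: T_def H_def)
      ultimately show ?thesis using nG Gsplit finT finH by (simp add: card_Un_disjoint)
    qed
    have HW: "H \<subseteq> W"
    proof
      fix x assume x: "x \<in> H"
      have "x < c + m"
      proof (rule ccontr)
        assume "\<not> x < c + m"
        hence "x - m \<in> S" "x - m \<noteq> 0" "x = m + (x - m)" using hc c_pos by auto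
        thus False using gen_nd[of x m "x - m"] x mS m_nz unfolding H_def by auto
      qed
      thus "x \<in> W" using x unfolding H_def W_def by auto
    qed
    have resT0: "\<And>x. x \<in> T \<Longrightarrow> x mod m \<noteq> 0"
    proof
      fix x assume x: "x \<in> T" "x mod m = 0"
      then obtain k where k: "x = k * m" by (metis mod_0_imp_dvd dvdE mult.commute)
      have "x - m = (k - 1) * m" using k by (simp add: diff_mult_distrib)
      hence "x - m \<in> S" using multS by simp
      moreover have "x - m \<noteq> 0" "x = m + (x - m)" using Tm[OF x(1)] by auto
      ultimately show False using gen_nd[of x m "x - m"] TG[OF x(1)] mS m_nz by auto
    qed
    have resT: "\<And>x y. x \<in> T \<Longrightarrow> y \<in> T \<Longrightarrow> x mod m = y mod m \<Longrightarrow> x = y"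
    proof -
      have *: "x = y" if x: "x \<in> T" "y \<in> T" "x mod m = y mod m" "x \<le> y" for x y
      proof (rule ccontr)
        assume ne: "x \<noteq> y"
        have "m dvd y - x" using x mod_eq_dvd_iff_nat by metis
        then obtain k where k: "y - x = k * m" by (metis dvdE mult.commute)
        hence "y - x \<in> S" using multS by simp
        moreover have "y - x \<noteq> 0" "y = x + (y - x)" using ne x by auto
        moreover have "x \<in> S" "x \<noteq> 0" using x(1) TG GS G0 by auto
        ultimately show False using gen_nd[of y x "y - x"] TG[OF x(2)] by auto
      qed
      fix x y assume "x \<in> T" "y \<in> T" "x mod m = y mod m"
      thus "x = y" using *[of x y] *[of y x] by (metis nat_le_linear)
    qed
    have Lbound: "q + (\<Sum>x\<in>T. N x) \<le> card L"
    proof -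
      define C0 where "C0 = (\<lambda>k. k * m) ` {..<q}"
      define C where "C = (\<lambda>x. (\<lambda>k. x + k * m) ` {..<N x})"
      have cC0: "card C0 = q" unfolding C0_def using m_pos by (subst card_image) (auto simp: inj_on_def)
      have cC: "\<And>x. card (C x) = N x" unfolding C_def using m_pos by (subst card_image) (auto simp: inj_on_def)
      have C0L: "C0 \<subseteq> L"
      proof
        fix e assume "e \<in> C0"
        then obtain k where "k < q" "e = k * m" unfolding C0_def by auto
        thus "e \<in> L" using ceil_lt[OF m_pos, of k c] multS unfolding q_def L_def left_elts_def c_def by auto
      qed
      have CL: "C x \<subseteq> L" if "x \<in> T" for x
      proof
        fix e assume "e \<in> C x"
        then obtain k where k: "k < N x" "e = x + k * m" unfolding C_def by auto
        have "k * m < c - x" using ceil_lt[OF m_pos, of k "c - x"] k unfolding N_def by simp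
        hence "e < c" using k by simp
        moreover have "e \<in> S" using k Sadd multS GS TG that by simp
        ultimately show "e \<in> L" unfolding L_def left_elts_def c_def by simp
      qed
      have res0: "\<And>e. e \<in> C0 \<Longrightarrow> e mod m = 0" unfolding C0_def by auto
      have resC: "\<And>x e. e \<in> C x \<Longrightarrow> e mod m = x mod m" unfolding C_def by auto
      have disj: "\<forall>x\<in>T. \<forall>y\<in>T. x \<noteq> y \<longrightarrow> C x \<inter> C y = {}"
      proof (intro ballI impI)
        fix x y assume "x \<in> T" "y \<in> T" "x \<noteq> y"
        hence "x mod m \<noteq> y mod m" using resT by blast
        show "C x \<inter> C y = {}"
        proof (rule equals0I)
          fix e assume "e \<in> C x \<inter> C y"
          thus False using resC[of e x] resC[of e y] \<open>x mod m \<noteq> y mod m\<close> by auto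
        qed
      qed
      have cU: "card (\<Union>(C ` T)) = (\<Sum>x\<in>T. N x)"
        using card_UN_disjoint[OF finT _ disj] cC by (simp add: C_def)
      have d0: "C0 \<inter> \<Union>(C ` T) = {}"
      proof (rule ccontr)
        assume "C0 \<inter> \<Union>(C ` T) \<noteq> {}"
        then obtain e x where "e \<in> C0" "x \<in> T" "e \<in> C x" by blast
        thus False using res0[of e] resC[of e x] resT0[of x] by simp
      qed
      have "card (C0 \<union> \<Union>(C ` T)) = q + (\<Sum>x\<in>T. N x)"
      proof -
        have "finite (\<Union>(C ` T))" using finT unfolding C_def by auto
        moreover have "finite C0" unfolding C0_def by auto
        ultimately show ?thesis using card_Un_disjoint[OF _ _ d0] cC0 cU by simp
      qed
      moreover have "C0 \<union> \<Union>(C ` T) \<subseteq> L" using C0L CL by blast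
      ultimately show ?thesis using card_mono[OF finL] by metis
    qed
    have Wbound: "card (W - H) \<le> 1 + card T + card Q"
    proof -
      define ap where "ap = (\<lambda>d. LEAST y. y \<in> S \<and> y mod m = d mod m)"
      have apS: "ap d \<in> S" "ap d mod m = d mod m" "ap d \<le> d" if "d \<in> S" for d
        using LeastI[of "\<lambda>y. y \<in> S \<and> y mod m = d mod m" d] Least_le[of "\<lambda>y. y \<in> S \<and> y mod m = d mod m" d] that
        unfolding ap_def by auto
      have apmin: "\<not> (y \<in> S \<and> y mod m = d mod m)" if "y < ap d" for y d
        using not_less_Least[of y "\<lambda>y. y \<in> S \<and> y mod m = d mod m"] that unfolding ap_def by auto
      have WS: "\<And>d. d \<in> W \<Longrightarrow> d \<in> S" using hc unfolding W_def by auto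
      have inj: "inj_on ap (W - H)"
      proof (rule inj_onI)
        fix d d' assume d: "d \<in> W - H" "d' \<in> W - H" "ap d = ap d'"
        have "d \<in> S" "d' \<in> S" using WS d by auto
        hence "d mod m = d' mod m" using apS(2)[of d] apS(2)[of d'] d(3) by simp
        moreover have "d < d' + m" "d' < d + m" using d unfolding W_def by auto
        ultimately show "d = d'" by (rule mod_close)
      qed
      have img: "ap ` (W - H) \<subseteq> insert 0 (T \<union> Q)"
      proof
        fix w assume "w \<in> ap ` (W - H)"
        then obtain d where d: "d \<in> W" "d \<notin> H" "w = ap d" by auto
        have wS: "w \<in> S" and wmod: "w mod m = d mod m" and wd: "w \<le> d" using apS WS d by auto
        show "w \<in> insert 0 (T \<union> Q)"
        proof (cases "w = 0")
          case True thus ?thesis by simp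
        next
          case wnz: False
          have dm0: "d mod m \<noteq> 0"
          proof
            assume "d mod m = 0"
            hence "\<not> 0 < w" using apmin[of 0 d] S0 d by auto
            thus False using wnz by simp
          qed
          show ?thesis
          proof (cases "w \<in> G")
            case True
            have "w \<noteq> m" using dm0 wmod by auto
            moreover have "w < c"
            proof (rule ccontr)
              assume "\<not> w < c"
              hence "w = d" using mod_close[OF wmod] wd d(1) unfolding W_def by auto
              thus False using True d \<open>\<not> w < c\<close> unfolding H_def by auto
            qed
            ultimately show ?thesis using True unfolding T_def by auto
          next
            case False
            have "m \<le> w \<longrightarrow> w - m \<notin> S"
            proof
              assume "m \<le> w"
              hence "w - m < w" using m_pos wnz by simp
              moreover have "(w - m) mod m = d mod m" using le_mod_geq[OF \<open>m \<le> w\<close>] wmod by simp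
              ultimately show "w - m \<notin> S" using apmin[of "w - m" d] d by auto
            qed
            moreover have "w < c + m" using wd d unfolding W_def by auto
            ultimately show ?thesis using False wS wnz unfolding Q_def by auto
          qed
        qed
      qed
      have "card (W - H) = card (ap ` (W - H))" using card_image[OF inj] by simp
      also have "\<dots> \<le> card (insert 0 (T \<union> Q))" using img finT finQ by (intro card_mono) auto
      also have "\<dots> \<le> 1 + card (T \<union> Q)" by (simp add: card_insert_if finT finQ)
      also have "\<dots> \<le> 1 + card T + card Q" using card_Un_le[of T Q] by simp
      finally show ?thesis .
    qed
    define \<rho> where "\<rho> = q * m - c"
    have rhoc: "\<rho> + c = q * m" "\<rho> < m" using qm1 qm2 unfolding \<rho>_def by auto
    have Qdec: "\<exists>x y. x \<in> T \<and> y \<in> T \<and> x \<le> y \<and> w = x + y" if w: "w \<in> Q" for w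
    proof -
      have wS: "w \<in> S" and wnz: "w \<noteq> 0" and wlt: "w < c + m" and wG: "w \<notin> G" using w unfolding Q_def by auto
      have mw: "m \<le> w" using m_le wS wnz by simp
      have wm: "w - m \<notin> S" using w mw unfolding Q_def by auto
      obtain y z where yz: "y \<in> S" "z \<in> S" "y \<noteq> 0" "z \<noteq> 0" "w = y + z" using decomp wS wnz wG by blast
      have ya: "a 2 \<le> y" using apery_big[OF mw wm yz(1) yz(3)] yz by simp
      have za: "a 2 \<le> z" using apery_big[OF mw wm yz(2) yz(4)] yz by simp
      have inG: "u \<in> G" if u: "u \<in> S" "u \<noteq> 0" "u \<le> w" "w - u \<in> S" "a 2 \<le> w - u" for u
      proof (rule ccontr)
        assume "u \<notin> G"
        then obtain u1 u2 where uu: "u1 \<in> S" "u2 \<in> S" "u1 \<noteq> 0" "u2 \<noteq> 0" "u = u1 + u2" using decomp u by blast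
        have "w - u1 = u2 + (w - u)" using uu u by simp
        moreover have "u2 + (w - u) \<in> S" using Sadd uu u by blast
        ultimately have "w - u1 \<in> S" by simp
        hence a1': "a 2 \<le> u1" using apery_big[OF mw wm uu(1) uu(3)] uu u by simp
        have "w - u2 = u1 + (w - u)" using uu u by simp
        moreover have "u1 + (w - u) \<in> S" using Sadd uu u by blast
        ultimately have "w - u2 \<in> S" by simp
        hence a2': "a 2 \<le> u2" using apery_big[OF mw wm uu(2) uu(4)] uu u by simp
        have "3 * a 2 \<le> w" using a1' a2' u uu by linarith
        thus False using h3 wlt by linarith
      qed
      have yG: "y \<in> G" using inG[of y] yz za by simp
      have zG: "z \<in> G" using inG[of z] yz ya by simp
      have yT: "y \<in> T" using yG ya za a2m wlt yz unfolding T_def by auto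
      have zT: "z \<in> T" using zG ya za a2m wlt yz unfolding T_def by auto
      show ?thesis
      proof (cases "y \<le> z")
        case True thus ?thesis using yT zT yz by blast
      next
        case False thus ?thesis using yT zT yz by (intro exI[of _ z] exI[of _ y]) auto
      qed
    qed
    have pairb: "q \<le> N x + N y + (if c + m - \<rho> \<le> x + y then 1 else 0)"
      if xy: "x \<in> T" "y \<in> T" "x + y < c + m" for x y
    proof -
      have Nx: "c - x \<le> N x * m" using ceil_ge(1)[OF m_pos, of "c - x"] unfolding N_def by simp
      have Ny: "c - y \<le> N y * m" using ceil_ge(1)[OF m_pos, of "c - y"] unfolding N_def by simp
      have xc: "x < c" "y < c" using Tc xy by auto
      have e1: "(N x + N y + 2) * m = N x * m + N y * m + 2 * m" by (simp add: algebra_simps)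
      have e2: "(N x + N y + 1) * m = N x * m + N y * m + m" by (simp add: algebra_simps)
      show ?thesis
      proof (cases "c + m - \<rho> \<le> x + y")
        case True
        have "q * m < (N x + N y + 2) * m" using e1 Nx Ny xc xy qm2 by linarith
        hence "q < N x + N y + 2" by (simp only: mult_less_cancel2)
        thus ?thesis using True by simp
      next
        case False
        have "q * m < (N x + N y + 1) * m" using e2 Nx Ny xc xy rhoc False by linarith
        hence "q < N x + N y + 1" by (simp only: mult_less_cancel2)
        thus ?thesis using False by simp
      qed
    qed
    define Pairs where "Pairs = {p. fst p \<in> T \<and> snd p \<in> T \<and> fst p \<le> snd p}"
    define \<pi> where "\<pi> = (\<lambda>w. SOME p. p \<in> Pairs \<and> w = fst p + snd p)"
    have \<pi>P: "\<pi> w \<in> Pairs \<and> w = fst (\<pi> w) + snd (\<pi> w)" if wQ: "w \<in> Q" for w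
    proof -
      obtain x y where "x \<in> T \<and> y \<in> T \<and> x \<le> y \<and> w = x + y" using Qdec[OF wQ] by blast
      hence "\<exists>p. p \<in> Pairs \<and> w = fst p + snd p" unfolding Pairs_def by (intro exI[of _ "(x,y)"]) auto
      from someI_ex[OF this] show ?thesis unfolding \<pi>_def by blast
    qed
    have inj\<pi>: "inj_on \<pi> Q"
    proof (rule inj_onI)
      fix w w' assume "w \<in> Q" "w' \<in> Q" "\<pi> w = \<pi> w'"
      thus "w = w'" using \<pi>P[of w] \<pi>P[of w'] by simp
    qed
    have finP: "finite Pairs"
      by (rule finite_subset[of _ "T \<times> T"]) (auto simp: Pairs_def finT)
    define F where "F = (\<lambda>p. N (fst p) + N (snd p))"
    define \<delta> where "\<delta> = (\<lambda>w. if c + m - \<rho> \<le> w then 1 else (0::nat))"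
    have s1: "q * card Q \<le> (\<Sum>w\<in>Q. F (\<pi> w)) + (\<Sum>w\<in>Q. \<delta> w)"
    proof -
      have "q * card Q = (\<Sum>w\<in>Q. q)" by simp
      also have "\<dots> \<le> (\<Sum>w\<in>Q. F (\<pi> w) + \<delta> w)"
      proof (rule sum_mono)
        fix w assume w: "w \<in> Q"
        have "fst (\<pi> w) \<in> T" "snd (\<pi> w) \<in> T" using \<pi>P[OF w] unfolding Pairs_def by auto
        moreover have "fst (\<pi> w) + snd (\<pi> w) < c + m" using \<pi>P[OF w] w unfolding Q_def by auto
        ultimately have "q \<le> N (fst (\<pi> w)) + N (snd (\<pi> w)) + (if c + m - \<rho> \<le> fst (\<pi> w) + snd (\<pi> w) then 1 else 0)"
          by (rule pairb)
        thus "q \<le> F (\<pi> w) + \<delta> w" unfolding F_def \<delta>_def using \<pi>P[OF w] by simp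
      qed
      also have "\<dots> = (\<Sum>w\<in>Q. F (\<pi> w)) + (\<Sum>w\<in>Q. \<delta> w)" by (simp add: sum.distrib)
      finally show ?thesis .
    qed
    have s2: "(\<Sum>w\<in>Q. F (\<pi> w)) \<le> (card T + 1) * (\<Sum>x\<in>T. N x)"
    proof -
      have "(\<Sum>w\<in>Q. F (\<pi> w)) = (\<Sum>p\<in>\<pi> ` Q. F p)" by (simp add: sum.reindex[OF inj\<pi>])
      also have "\<dots> \<le> (\<Sum>p\<in>Pairs. F p)" using \<pi>P by (intro sum_mono2 finP) auto
      also have "\<dots> = (card T + 1) * (\<Sum>x\<in>T. N x)" unfolding F_def Pairs_def by (rule pair_sum[OF finT])
      finally show ?thesis .
    qed
    have s3: "(\<Sum>w\<in>Q. \<delta> w) \<le> \<rho>"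
    proof -
      have "(\<Sum>w\<in>Q. \<delta> w) = card (Q \<inter> {w. c + m - \<rho> \<le> w})"
        unfolding \<delta>_def using finQ by (simp add: sum.If_cases)
      also have "\<dots> \<le> card {c + m - \<rho>..<c + m}"
        by (intro card_mono) (auto simp: Q_def)
      also have "\<dots> = \<rho>" using rhoc by simp
      finally show ?thesis .
    qed
    have Qb: "q * card Q \<le> (card T + 1) * (\<Sum>x\<in>T. N x) + \<rho>" using s1 s2 s3 by linarith
    have hW: "card (W - H) = m - card H" using card_Diff_subset[OF finH HW] unfolding W_def by simp
    have hm: "card H \<le> m" using card_mono[OF _ HW] unfolding W_def by simp
    define t where "t = card T"
    define h where "h = card H"
    define k where "k = card Q"
    define \<Sigma> where "\<Sigma> = (\<Sum>x\<in>T. N x)"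
    define l where "l = card L"
    have A: "m \<le> 1 + t + k + h" using Wbound hW hm unfolding t_def k_def h_def by linarith
    have B: "q * m \<le> q * (1 + t + k + h)" by (rule mult_le_mono2[OF A])
    have C: "q * (1 + t + k + h) = q + q*t + q*k + q*h" by (simp add: algebra_simps)
    have D: "(t + h + 1) * (q + \<Sigma>) = q*t + q*h + q + t*\<Sigma> + h*\<Sigma> + \<Sigma>" by (simp add: algebra_simps)
    have E: "(t + 1) * \<Sigma> = t*\<Sigma> + \<Sigma>" by (simp add: algebra_simps)
    have Qb': "q * k \<le> (t + 1) * \<Sigma> + \<rho>" using Qb unfolding t_def k_def \<Sigma>_def .
    have F1: "c + \<rho> \<le> q + q*t + q*k + q*h" using B C rhoc(1) by linarith
    have F2: "c \<le> q + q*t + q*h + (t*\<Sigma> + \<Sigma>)" using F1 Qb' E by linarith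
    have "c \<le> (t + h + 1) * (q + \<Sigma>)" using F2 D by linarith
    also have "\<dots> \<le> (t + h + 1) * l" using Lbound unfolding l_def \<Sigma>_def by (intro mult_le_mono2) simp
    also have "\<dots> = n * l" using ncard unfolding t_def h_def by simp
    finally show ?thesis unfolding n_def l_def L_def c_def .
  qed
qed

end
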